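(* (i) For every combinatorial line $U\in \mathscr{L}$ the pair $\Pi^U=(P^U, \psi_{U})$ is a picture over $G$ with $\Pi^U_x=\psi_U^{-1}(x)=U$. (ii) If $U, V\in \mathscr{L}$ are distinct, then $P^U\cap P^V=U\cap V$.
   Context: Let $k\ge 3$ and let $G$ be a $k$-uniform hypergraph. A $k$-element subset $L$ of a Hales-Jewett cube $[k]^m$ is a quasiline if for every coordinate the entries of the points of $L$ in that coordinate are either all identical or mutually distinct. Over an arbitrary finite alphabet $A$, a combinatorial line in $A^n$ is the image of a map $\eta\colon A\to A^n$ given by a partition $[n]=C\,\dot\cup\, M$ with $M\neq\emptyset$ and a function $g\colon C\to A$, where the $i$-th coordinate of $\eta(a)$ is $g(i)$ for $i\in C$ and $a$ for $i\in M$ (such $\eta$ is a combinatorial embedding). A picture over $G$ is a pair $\Pi=(P,\psi)$ with $P\subseteq [k]^m$ and $\psi\colon P\to V(G)$ such that every quasiline $L\subseteq P$ is a combinatorial line with $\psi[L]\in E(G)$; for a vertex $x$ of $G$ the music line is $\Pi_x=\psi^{-1}(x)$. Now let $\Pi=(P,\psi_\Pi)$ be a picture over $G$ with $P\subseteq[k]^m$, let $x$ be a vertex of $G$, and, viewing the music line $\Pi_x$ as an alphabet, let $\mathscr{L}$ be a collection of combinatorial lines in the $n$-dimensional Hales-Jewett cube $\Pi_x^n$. For every $U\in\mathscr{L}$ let $\eta_U\colon \Pi_x\to \Pi_x^n$ be the combinatorial embedding with image $U$, given by a partition $[n]=C\,\dot\cup\, M$ ($M\ne\emptyset$) and $g\colon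 C\to\Pi_x$. Let $\eta_U^+\colon [k]^m\to([k]^m)^n=[k]^{mn}$ be its extension defined by the same data: the $i$-th block of $\eta_U^+(a)$ is $g(i)$ for $i\in C$ and $a$ for $i\in M$ (this is a combinatorial embedding over the alphabet $[k]$, and it maps quasilines to quasilines and combinatorial lines to combinatorial lines). Set $P^U=\eta_U^+(P)$ and $\psi_U=\psi_\Pi\circ(\eta_U^+|_{P})^{-1}\colon P^U\to V(G)$. *)

theory Defs
  imports Main
begin

text \<open>Points of the Hales-Jewett cube [k]^m are lists of length m with entries in {1..k}.
  A point of ([k]^m)^n is a list of n such lists; it is identified with a point of
  [k]^(m n) via concat (block i of the concatenation is the i-th entry).\<close>

definition hj_cube :: "nat \<Rightarrow> nat \<Rightarrow> nat list set" where
  "hj_cube k m = {p. length p = m \<and> set p \<subseteq> {1..k}}"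

definition comb_emb :: "nat \<Rightarrow> nat set \<Rightarrow> (nat \<Rightarrow> 'a) \<Rightarrow> 'a \<Rightarrow> 'a list" where
  "comb_emb n M g a = map (\<lambda>i. if i \<in> M then a else g i) [0..<n]"

definition comb_data :: "'a set \<Rightarrow> nat \<Rightarrow> nat set \<Rightarrow> (nat \<Rightarrow> 'a) \<Rightarrow> bool" where
  "comb_data A n M g \<longleftrightarrow> M \<noteq> {} \<and> M \<subseteq> {0..<n} \<and> (\<forall>i \<in> {0..<n} - M. g i \<in> A)"

definition comb_line :: "'a set \<Rightarrow> nat \<Rightarrow> 'a list set \<Rightarrow> bool" where
  "comb_line A n L \<longleftrightarrow> (\<exists>M g. comb_data A n M g \<and> L = comb_emb n M g ` A)"

definition quasiline :: "nat \<Rightarrow> nat \<Rightarrow> nat list set \<Rightarrow> bool" where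
  "quasiline k m L \<longleftrightarrow> L \<subseteq> hj_cube k m \<and> card L = k \<and>
     (\<forall>i<m. (\<forall>p\<in>L. \<forall>q\<in>L. p ! i = q ! i) \<or> inj_on (\<lambda>p. p ! i) L)"

definition uniform_hypergraph :: "nat \<Rightarrow> 'v set \<Rightarrow> 'v set set \<Rightarrow> bool" where
  "uniform_hypergraph k VG E \<longleftrightarrow> (\<forall>e\<in>E. e \<subseteq> VG \<and> card e = k)"

definition picture :: "nat \<Rightarrow> nat \<Rightarrow> 'v set \<Rightarrow> 'v set set \<Rightarrow> nat list set \<Rightarrow> (nat list \<Rightarrow> 'v) \<Rightarrow> bool" where
  "picture k m VG E P \<psi> \<longleftrightarrow> P \<subseteq> hj_cube k m \<and> \<psi> ` P \<subseteq> VG \<and>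
     (\<forall>L. L \<subseteq> P \<longrightarrow> quasiline k m L \<longrightarrow> comb_line {1..k} m L \<and> \<psi> ` L \<in> E)"

definition music_line :: "nat list set \<Rightarrow> (nat list \<Rightarrow> 'v) \<Rightarrow> 'v \<Rightarrow> nat list set" where
  "music_line P \<psi> x = {p \<in> P. \<psi> p = x}"

definition eta_plus :: "nat \<Rightarrow> nat set \<Rightarrow> (nat \<Rightarrow> nat list) \<Rightarrow> nat list \<Rightarrow> nat list" where
  "eta_plus n M g a = concat (comb_emb n M g a)"

end

theory Submission
  imports Defs
begin


lemma nth_concat_blocks:
  "\<forall>xs\<in>set xss. length xs = m \<Longrightarrow> i < length xss \<Longrightarrow> j < m \<Longrightarrow> concat xss ! (i*m+j) = xss ! i ! j"
proof (induction xss arbitrary: i)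
  case Nil then show ?case by simp
next
  case (Cons x xs)
  show ?case
  proof (cases i)
    case 0 then show ?thesis using Cons.prems by (simp add: nth_append)
  next
    case (Suc i')
    have "concat (x#xs) ! (i*m+j) = concat xs ! (i'*m+j)"
      using Cons.prems Suc by (simp add: nth_append)
    also have "\<dots> = xs ! i' ! j" using Cons Suc by simp
    finally show ?thesis using Suc by simp
  qed
qed

lemma concat_blocks_inj:
  "length xs = length ys \<Longrightarrow> \<forall>x\<in>set xs. length x = m \<Longrightarrow> \<forall>y\<in>set ys. length y = m
   \<Longrightarrow> concat xs = concat ys \<Longrightarrow> xs = ys"
proof (induction xs arbitrary: ys)
  case Nil then show ?case by simp
next
  case (Cons x xs)
  then obtain y ys' where ys: "ys = y # ys'" by (cases ys) auto
  have "x @ concat xs = y @ concat ys'" using Cons.prems ys by simp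
  moreover have "length x = length y" using Cons.prems ys by simp
  ultimately have "x = y" "concat xs = concat ys'" by auto
  then show ?case using Cons ys by simp
qed

lemma comb_emb_nth: "i < n \<Longrightarrow> comb_emb n M g a ! i = (if i \<in> M then a else g i)"
  by (simp add: comb_emb_def)

lemma comb_emb_length[simp]: "length (comb_emb n M g a) = n"
  by (simp add: comb_emb_def)

lemma comb_emb_set: "set (comb_emb n M g a) \<subseteq> insert a (g ` ({0..<n} - M))"
  by (auto simp: comb_emb_def)

lemma eta_coord:
  assumes "length a = m" "\<forall>i\<in>{0..<n}-M. length (g i) = m" "i < n" "j < m"
  shows "eta_plus n M g a ! (i*m+j) = (if i \<in> M then a ! j else g i ! j)"
proof -
  have "\<forall>xs\<in>set (comb_emb n M g a). length xs = m"
    using comb_emb_set[of n M g a] assms by blast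
  then show ?thesis unfolding eta_plus_def
    using nth_concat_blocks[of "comb_emb n M g a" m i j] assms comb_emb_nth[of i n M g a]
    by simp
qed

lemma eta_len:
  assumes "length a = m" "\<forall>i\<in>{0..<n}-M. length (g i) = m"
  shows "length (eta_plus n M g a) = m*n"
proof -
  have "map length (comb_emb n M g a) = replicate n m"
    using assms by (auto simp: comb_emb_def intro!: nth_equalityI)
  then show ?thesis unfolding eta_plus_def length_concat by (simp add: sum_list_replicate)
qed

lemma eta_cube:
  assumes "a \<in> hj_cube k m" "\<forall>i\<in>{0..<n}-M. g i \<in> hj_cube k m"
  shows "eta_plus n M g a \<in> hj_cube k (m*n)"
proof -
  have "length (eta_plus n M g a) = m*n" using assms eta_len[of a m n M g] by (auto simp: hj_cube_def)
  moreover have "\<forall>xs\<in>set (comb_emb n M g a). set xs \<subseteq> {1..k}"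
    using assms comb_emb_set[of n M g a] unfolding hj_cube_def by blast
  then have "set (eta_plus n M g a) \<subseteq> {1..k}"
    unfolding eta_plus_def set_concat by blast
  ultimately show ?thesis by (simp add: hj_cube_def)
qed

lemma eta_inj:
  assumes P: "P \<subseteq> hj_cube k m" and M: "M \<noteq> {}" "M \<subseteq> {0..<n}"
    and g: "\<forall>i\<in>{0..<n}-M. g i \<in> hj_cube k m"
  shows "inj_on (eta_plus n M g) P"
proof (rule inj_onI)
  fix a b assume a: "a \<in> P" and b: "b \<in> P" and e: "eta_plus n M g a = eta_plus n M g b"
  obtain i0 where i0: "i0 \<in> M" using M by blast
  have i0n: "i0 < n" using i0 M by auto
  have la: "length a = m" and lb: "length b = m" using a b P by (auto simp: hj_cube_def)
  have lg: "\<forall>i\<in>{0..<n}-M. length (g i) = m" using g by (auto simp: hj_cube_def)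
  show "a = b"
  proof (rule nth_equalityI)
    show "length a = length b" using la lb by simp
    fix j assume "j < length a"
    then have j: "j < m" using la by simp
    have "a ! j = eta_plus n M g a ! (i0*m+j)" using eta_coord[OF la lg i0n j] i0 by simp
    also have "\<dots> = eta_plus n M g b ! (i0*m+j)" using e by simp
    also have "\<dots> = b ! j" using eta_coord[OF lb lg i0n j] i0 by simp
    finally show "a ! j = b ! j" .
  qed
qed

lemma eta_comb_line:
  assumes M: "M \<noteq> {}" "M \<subseteq> {0..<n}"
    and g: "\<forall>i\<in>{0..<n}-M. g i \<in> hj_cube k m"
    and cl: "comb_line {1..k} m L'"
  shows "comb_line {1..k} (m*n) (eta_plus n M g ` L')"
proof -
  obtain M' g' where d: "comb_data {1..k} m M' g'" and L': "L' = comb_emb m M' g' ` {1..k}"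
    using cl unfolding comb_line_def by blast
  define M'' where "M'' = {t. t < m*n \<and> t div m \<in> M \<and> t mod m \<in> M'}"
  define g'' where "g'' t = (if t div m \<in> M then g' (t mod m) else g (t div m) ! (t mod m))" for t
  have lg: "\<forall>i\<in>{0..<n}-M. length (g i) = m" using g by (auto simp: hj_cube_def)
  have eq: "eta_plus n M g (comb_emb m M' g' c) = comb_emb (m*n) M'' g'' c" for c
  proof (rule nth_equalityI)
    have "length (comb_emb m M' g' c) = m" by simp
    then show "length (eta_plus n M g (comb_emb m M' g' c)) = length (comb_emb (m*n) M'' g'' c)"
      using eta_len[OF _ lg] by simp
    fix t assume "t < length (eta_plus n M g (comb_emb m M' g' c))"
    then have t: "t < m*n" using eta_len[OF _ lg, of "comb_emb m M' g' c"] by simp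
    then have m0: "0 < m" by (cases m) auto
    have tdiv: "t div m < n" using t by (simp add: less_mult_imp_div_less mult.commute)
    have tmod: "t mod m < m" using m0 by simp
    have teq: "t = (t div m) * m + t mod m" by simp
    have "eta_plus n M g (comb_emb m M' g' c) ! t
        = (if t div m \<in> M then comb_emb m M' g' c ! (t mod m) else g (t div m) ! (t mod m))"
      using eta_coord[OF comb_emb_length lg tdiv tmod] teq by metis
    also have "\<dots> = comb_emb (m*n) M'' g'' c ! t"
      using t tmod by (simp add: comb_emb_nth M''_def g''_def)
    finally show "eta_plus n M g (comb_emb m M' g' c) ! t = comb_emb (m*n) M'' g'' c ! t" .
  qed
  have d'': "comb_data {1..k} (m*n) M'' g''"
    unfolding comb_data_def
  proof (intro conjI ballI)
    obtain i0 where i0: "i0 \<in> M" using M by blast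
    obtain j0 where j0: "j0 \<in> M'" using d by (auto simp: comb_data_def)
    have i0n: "i0 < n" using i0 M by auto
    have j0m: "j0 < m" using j0 d by (auto simp: comb_data_def)
    have "i0*m+j0 < m*n"
    proof -
      have "i0*m+j0 < i0*m+m" using j0m by simp
      also have "\<dots> = (i0+1)*m" by simp
      also have "\<dots> \<le> n*m" using i0n by (intro mult_right_mono) auto
      finally show ?thesis by (simp add: mult.commute)
    qed
    moreover have "(i0*m+j0) div m = i0" "(i0*m+j0) mod m = j0" using j0m by auto
    ultimately have "i0*m+j0 \<in> M''" using i0 j0 by (simp add: M''_def)
    then show "M'' \<noteq> {}" by blast
    show "M'' \<subseteq> {0..<m*n}" by (auto simp: M''_def)
    fix t assume t: "t \<in> {0..<m*n} - M''"
    then have tl: "t < m*n" by simp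
    then have m0: "0 < m" by (cases m) auto
    have tdiv: "t div m < n" using tl by (simp add: less_mult_imp_div_less mult.commute)
    have tmod: "t mod m < m" using m0 by simp
    show "g'' t \<in> {1..k}"
    proof (cases "t div m \<in> M")
      case True
      then have "t mod m \<notin> M'" using t by (auto simp: M''_def)
      then show ?thesis using True d tmod by (auto simp: comb_data_def g''_def)
    next
      case False
      then have "g (t div m) \<in> hj_cube k m" using g tdiv by auto
      then have "g (t div m) ! (t mod m) \<in> set (g (t div m))" "set (g (t div m)) \<subseteq> {1..k}"
        using tmod by (auto simp: hj_cube_def)
      then show ?thesis using False by (auto simp: g''_def)
    qed
  qed
  have "eta_plus n M g ` L' = comb_emb (m*n) M'' g'' ` {1..k}"
    unfolding L' image_image eq ..
  then show ?thesis using d'' unfolding comb_line_def by blast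
qed

lemma eta_picture:
  assumes pic: "picture k m VG E P \<psi>" and M: "M \<noteq> {}" "M \<subseteq> {0..<n}"
    and gP: "\<forall>i\<in>{0..<n}-M. g i \<in> P"
  shows "picture k (m*n) VG E (eta_plus n M g ` P) (\<lambda>q. \<psi> (inv_into P (eta_plus n M g) q))"
proof -
  let ?e = "eta_plus n M g"
  have P: "P \<subseteq> hj_cube k m" using pic by (simp add: picture_def)
  have g: "\<forall>i\<in>{0..<n}-M. g i \<in> hj_cube k m" using gP P by blast
  have lg: "\<forall>i\<in>{0..<n}-M. length (g i) = m" using g by (auto simp: hj_cube_def)
  have inj: "inj_on ?e P" by (rule eta_inj[OF P M g])
  have invf: "inv_into P ?e (?e a) = a" if "a \<in> P" for a using inj that by simp
  have cube: "?e ` P \<subseteq> hj_cube k (m*n)" using eta_cube g P by blast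
  have vg: "(\<lambda>q. \<psi> (inv_into P ?e q)) ` (?e ` P) \<subseteq> VG"
    using pic invf by (auto simp: picture_def)
  have ql: "comb_line {1..k} (m*n) L \<and> (\<lambda>q. \<psi> (inv_into P ?e q)) ` L \<in> E"
    if LP: "L \<subseteq> ?e ` P" and qL: "quasiline k (m*n) L" for L
  proof -
    define L' where "L' = {a \<in> P. ?e a \<in> L}"
    have LL': "L = ?e ` L'" using LP by (auto simp: L'_def)
    have L'P: "L' \<subseteq> P" by (auto simp: L'_def)
    have injL': "inj_on ?e L'" using inj L'P inj_on_subset by blast
    obtain i0 where i0: "i0 \<in> M" using M by blast
    have i0n: "i0 < n" using i0 M by auto
    have coord: "?e a ! (i0*m+j) = a ! j" if "a \<in> P" "j < m" for a j
    proof -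
      have "length a = m" using that P by (auto simp: hj_cube_def)
      then show ?thesis using eta_coord[OF _ lg i0n that(2)] i0 by simp
    qed
    have cm: "i0*m+j < m*n" if "j < m" for j
    proof -
      have "i0*m+j < i0*m+m" using that by simp
      also have "\<dots> = (i0+1)*m" by simp
      also have "\<dots> \<le> n*m" using i0n by (intro mult_right_mono) auto
      finally show ?thesis by (simp add: mult.commute)
    qed
    have qL': "quasiline k m L'"
      unfolding quasiline_def
    proof (intro conjI allI impI)
      show "L' \<subseteq> hj_cube k m" using L'P P by blast
      show "card L' = k" using qL LL' injL' card_image by (fastforce simp: quasiline_def)
      fix j assume j: "j < m"
      have "(\<forall>p\<in>L. \<forall>q\<in>L. p ! (i0*m+j) = q ! (i0*m+j)) \<or> inj_on (\<lambda>p. p ! (i0*m+j)) L"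
        using qL cm[OF j] by (simp add: quasiline_def)
      then show "(\<forall>p\<in>L'. \<forall>q\<in>L'. p ! j = q ! j) \<or> inj_on (\<lambda>p. p ! j) L'"
      proof
        assume h: "\<forall>p\<in>L. \<forall>q\<in>L. p ! (i0*m+j) = q ! (i0*m+j)"
        have "p ! j = q ! j" if "p \<in> L'" "q \<in> L'" for p q
        proof -
          have "?e p \<in> L" "?e q \<in> L" using that LL' by auto
          then have "?e p ! (i0*m+j) = ?e q ! (i0*m+j)" using h by blast
          moreover have "p \<in> P" "q \<in> P" using that L'P by auto
          ultimately show ?thesis using coord j by metis
        qed
        then show ?thesis by blast
      next
        assume h: "inj_on (\<lambda>p. p ! (i0*m+j)) L"
        have "p = q" if "p \<in> L'" "q \<in> L'" "p ! j = q ! j" for p q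
        proof -
          have "?e p \<in> L" "?e q \<in> L" using that LL' by auto
          moreover have "p \<in> P" "q \<in> P" using that L'P by auto
          then have "?e p ! (i0*m+j) = ?e q ! (i0*m+j)" using coord that(3) j by metis
          ultimately have "?e p = ?e q" using h by (auto dest: inj_onD)
          then show ?thesis using injL' that by (auto dest: inj_onD)
        qed
        then show ?thesis by (auto intro: inj_onI)
      qed
    qed
    have h1: "comb_line {1..k} m L'" and h2: "\<psi> ` L' \<in> E" using pic qL' L'P by (auto simp: picture_def)
    have "(\<lambda>q. \<psi> (inv_into P ?e q)) ` L = \<psi> ` L'"
      unfolding LL' image_image using invf L'P by (auto intro!: image_cong)
    then show ?thesis using h2 eta_comb_line[OF M g h1] LL' by simp
  qed
  show ?thesis unfolding picture_def using cube vg ql by blast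
qed

lemma eta_inter:
  assumes P: "P \<subseteq> hj_cube k m" and X: "X \<subseteq> P"
    and dU: "comb_data X n M1 g1" and dV: "comb_data X n M2 g2"
    and U: "U = comb_emb n M1 g1 ` X" and V: "V = comb_emb n M2 g2 ` X" and UV: "U \<noteq> V"
  shows "eta_plus n M1 g1 ` P \<inter> eta_plus n M2 g2 ` P = concat ` (U \<inter> V)"
proof
  show "concat ` (U \<inter> V) \<subseteq> eta_plus n M1 g1 ` P \<inter> eta_plus n M2 g2 ` P"
  proof
    fix q assume "q \<in> concat ` (U \<inter> V)"
    then obtain u where u: "u \<in> U" "u \<in> V" "q = concat u" by blast
    obtain a where a: "a \<in> X" "u = comb_emb n M1 g1 a" using u U by blast
    obtain b where b: "b \<in> X" "u = comb_emb n M2 g2 b" using u V by blast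
    have "q = eta_plus n M1 g1 a" "q = eta_plus n M2 g2 b" using a b u by (auto simp: eta_plus_def)
    then show "q \<in> eta_plus n M1 g1 ` P \<inter> eta_plus n M2 g2 ` P"
      using a b X by blast
  qed
next
  show "eta_plus n M1 g1 ` P \<inter> eta_plus n M2 g2 ` P \<subseteq> concat ` (U \<inter> V)"
  proof
    fix q assume "q \<in> eta_plus n M1 g1 ` P \<inter> eta_plus n M2 g2 ` P"
    then obtain a b where a: "a \<in> P" and b: "b \<in> P" and qa: "q = eta_plus n M1 g1 a"
      and qb: "q = eta_plus n M2 g2 b" by blast
    let ?w = "comb_emb n M1 g1 a"
    have la: "length a = m" and lb: "length b = m" using a b P by (auto simp: hj_cube_def)
    have g1P: "\<forall>i\<in>{0..<n}-M1. g1 i \<in> X" and g2P: "\<forall>i\<in>{0..<n}-M2. g2 i \<in> X"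
      using dU dV by (auto simp: comb_data_def)
    have lw1: "\<forall>x\<in>set ?w. length x = m"
      using comb_emb_set[of n M1 g1 a] la g1P X P by (auto simp: hj_cube_def)
    have lw2: "\<forall>x\<in>set (comb_emb n M2 g2 b). length x = m"
      using comb_emb_set[of n M2 g2 b] lb g2P X P by (auto simp: hj_cube_def)
    have w: "?w = comb_emb n M2 g2 b"
      using concat_blocks_inj[OF _ lw1 lw2] qa qb by (simp add: eta_plus_def)
    have wi: "(if i \<in> M1 then a else g1 i) = (if i \<in> M2 then b else g2 i)" if "i < n" for i
      using comb_emb_nth[OF that, of M1 g1 a] comb_emb_nth[OF that, of M2 g2 b] w by simp
    have M1n: "M1 \<subseteq> {0..<n}" "M1 \<noteq> {}" and M2n: "M2 \<subseteq> {0..<n}" "M2 \<noteq> {}"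
      using dU dV by (auto simp: comb_data_def)
    have neq: "M1 \<noteq> M2"
    proof
      assume eq: "M1 = M2"
      have "comb_emb n M1 g1 c = comb_emb n M2 g2 c" for c
        unfolding comb_emb_def eq
      proof (rule map_cong[OF refl])
        fix i assume "i \<in> set [0..<n]"
        then have "i < n" by simp
        from wi[OF this] show "(if i \<in> M2 then c else g1 i) = (if i \<in> M2 then c else g2 i)"
          using eq by (auto split: if_splits)
      qed
      then have "U = V" unfolding U V by simp
      then show False using UV by simp
    qed
    have aX: "a \<in> X" and bX: "b \<in> X"
    proof -
      have "a \<in> X \<and> b \<in> X"
      proof (cases "M1 \<subseteq> M2")
        case True
        then obtain i where i: "i \<in> M2" "i \<notin> M1" using neq by blast
        then have "i < n" using M2n by auto
        from wi[OF this] i have bg: "b = g1 i" by simp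
        have "b \<in> X" using g1P i \<open>i < n\<close> bg by auto
        moreover obtain j where j: "j \<in> M1" using M1n by blast
        then have "j \<in> M2" "j < n" using True M1n by auto
        then have "a = b" using wi[of j] j by simp
        ultimately show ?thesis by simp
      next
        case False
        then obtain i where i: "i \<in> M1" "i \<notin> M2" by blast
        then have "i < n" using M1n by auto
        from wi[OF this] i have ag: "a = g2 i" by simp
        have aX: "a \<in> X" using g2P i \<open>i < n\<close> ag by auto
        show ?thesis
        proof (cases "M2 \<subseteq> M1")
          case True
          obtain j where j: "j \<in> M2" using M2n by blast
          then have "j \<in> M1" "j < n" using True M2n by auto
          then have "a = b" using wi[of j] j by simp
          then show ?thesis using aX by simp
        next
          case False
          then obtain j where j: "j \<in> M2" "j \<notin> M1" by blast
          then have "j < n" using M2n by auto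
          from wi[OF this] j have "b = g1 j" by simp
          then show ?thesis using aX g1P j \<open>j < n\<close> by auto
        qed
      qed
      then show "a \<in> X" "b \<in> X" by auto
    qed
    have "?w \<in> U" using aX U by blast
    moreover have "?w \<in> V" using bX V w by blast
    ultimately show "q \<in> concat ` (U \<inter> V)" using qa by (auto simp: eta_plus_def)
  qed
qed


theorem fact4p4:
  fixes k m n :: nat
    and VG :: "'v set" and E :: "'v set set"
    and P :: "nat list set" and \<psi> :: "nat list \<Rightarrow> 'v" and x :: 'v
    and \<L> :: "nat list list set set"
    and MU :: "nat list list set \<Rightarrow> nat set"
    and gU :: "nat list list set \<Rightarrow> nat \<Rightarrow> nat list"
  assumes "k \<ge> 3"
    and "uniform_hypergraph k VG E"
    and "picture k m VG E P \<psi>"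
    and "x \<in> VG"
    and "\<forall>U\<in>\<L>. comb_data (music_line P \<psi> x) n (MU U) (gU U) \<and>
                 U = comb_emb n (MU U) (gU U) ` music_line P \<psi> x"
  shows "(\<forall>U\<in>\<L>.
            picture k (m * n) VG E (eta_plus n (MU U) (gU U) ` P)
              (\<lambda>q. \<psi> (inv_into P (eta_plus n (MU U) (gU U)) q)) \<and>
            music_line (eta_plus n (MU U) (gU U) ` P)
              (\<lambda>q. \<psi> (inv_into P (eta_plus n (MU U) (gU U)) q)) x = concat ` U)
       \<and> (\<forall>U\<in>\<L>. \<forall>V\<in>\<L>. U \<noteq> V \<longrightarrow>
            eta_plus n (MU U) (gU U) ` P \<inter> eta_plus n (MU V) (gU V) ` P = concat ` (U \<inter> V))"
proof -
  let ?X = "music_line P \<psi> x"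
  have P: "P \<subseteq> hj_cube k m" using assms(3) by (simp add: picture_def)
  have XP: "?X \<subseteq> P" by (auto simp: music_line_def)
  have A: "picture k (m * n) VG E (eta_plus n (MU U) (gU U) ` P)
              (\<lambda>q. \<psi> (inv_into P (eta_plus n (MU U) (gU U)) q)) \<and>
            music_line (eta_plus n (MU U) (gU U) ` P)
              (\<lambda>q. \<psi> (inv_into P (eta_plus n (MU U) (gU U)) q)) x = concat ` U" if U: "U \<in> \<L>" for U
  proof -
    note UU = bspec[OF assms(5) U]
    have d: "comb_data ?X n (MU U) (gU U)" by (rule conjunct1[OF UU])
    have Ueq: "U = comb_emb n (MU U) (gU U) ` ?X" by (rule conjunct2[OF UU])
    have M: "MU U \<noteq> {}" "MU U \<subseteq> {0..<n}" and gX: "\<forall>i\<in>{0..<n}-MU U. gU U i \<in> ?X"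
      using d by (auto simp: comb_data_def)
    have gP: "\<forall>i\<in>{0..<n}-MU U. gU U i \<in> P" using gX XP by blast
    have g: "\<forall>i\<in>{0..<n}-MU U. gU U i \<in> hj_cube k m" using gP P by blast
    have inj: "inj_on (eta_plus n (MU U) (gU U)) P" by (rule eta_inj[OF P M g])
    have "music_line (eta_plus n (MU U) (gU U) ` P)
              (\<lambda>q. \<psi> (inv_into P (eta_plus n (MU U) (gU U)) q)) x
          = eta_plus n (MU U) (gU U) ` ?X"
      using inj by (auto simp: music_line_def)
    also have "\<dots> = concat ` (comb_emb n (MU U) (gU U) ` ?X)" by (simp add: image_image eta_plus_def)
    also have "\<dots> = concat ` U" by (rule sym, rule arg_cong[OF Ueq])
    finally show ?thesis by (rule conjI[OF eta_picture[OF assms(3) M gP]])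
  qed
  have B: "eta_plus n (MU U) (gU U) ` P \<inter> eta_plus n (MU V) (gU V) ` P = concat ` (U \<inter> V)"
    if "U \<in> \<L>" "V \<in> \<L>" "U \<noteq> V" for U V
  proof -
    note UU = bspec[OF assms(5) that(1)] and VV = bspec[OF assms(5) that(2)]
    show ?thesis by (rule eta_inter[OF P XP conjunct1[OF UU] conjunct1[OF VV]
        conjunct2[OF UU] conjunct2[OF VV] that(3)])
  qed
  show ?thesis by (intro conjI ballI impI A B)
qed

end
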